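(* Assume all agents share a common sense of direction. Then the leader election problem can be solved in $O(\log^2 N)$ rounds in the basic model with $n$ even, and in $\log N$ rounds in the other settings (the basic model with $n$ odd, the lazy model, and the perceptive model).
   Context: Model: $n>4$ agents are at distinct, arbitrary initial positions on a circle of circumference $1$ and act in synchronised unit-time rounds. At the start of a round each agent chooses a direction and moves at unit speed. Agents never pass: two moving agents that collide instantly reverse direction, and a moving agent hitting an idle one becomes idle while the idle one starts moving in the former's direction. There is no communication. At the end of each round an agent learns the clockwise distance from its start-of-round to its end-of-round position. The three models differ as follows: - Basic: direction in $\{\text{right},\text{left}\}$. - Lazy: direction in $\{\text{idle},\text{right},\text{left}\}$. - Perceptive: as basic, plus the agent learns the distance from its start position to its first collision in the round. Agents have distinct IDs in $\{1,\dots,N\}$, $N\ge n$ known, and know the parity of $n$. Leader election is solved when exactly one agent has status "leader" and all others "non-leader". *)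

theory Defs
  imports "HOL-Analysis.Analysis"
begin

(* Directions chosen by an agent.  Common sense of direction: Right = clockwise
   = increasing coordinate on the circle R/Z for every agent. *)
datatype dir = Right | Left | Idle

datatype model = Basic | Lazy | Perceptive

definition allowed :: "model \<Rightarrow> dir \<Rightarrow> bool" where
  "allowed m d = (if m = Lazy then True else d \<noteq> Idle)"

definition vel :: "dir \<Rightarrow> real" where
  "vel d = (case d of Right \<Rightarrow> 1 | Left \<Rightarrow> -1 | Idle \<Rightarrow> 0)"

(* Circle of circumference 1 = [0,1) with coordinates mod 1.  Dynamics within one
   round (time t in [0,1]): collisions exchange velocities (two movers reverse,
   a mover hitting an idle agent stops and the idle one moves on).  This is
   modelled by "ghost" particles on the universal cover R: ghost (j,k) starts at
   p j + k and moves with constant velocity v j; the agents are the order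
   statistics of the ghost configuration (agents never pass). *)
definition ghost :: "(nat \<Rightarrow> real) \<Rightarrow> (nat \<Rightarrow> real) \<Rightarrow> nat \<Rightarrow> int \<Rightarrow> real \<Rightarrow> real" where
  "ghost p v j k t = p j + real_of_int k + v j * t"

definition gcount :: "nat \<Rightarrow> (nat \<Rightarrow> real) \<Rightarrow> (nat \<Rightarrow> real) \<Rightarrow> real \<Rightarrow> real \<Rightarrow> int" where
  "gcount n p v t y =
     int (card {(j,k). j < n \<and> k \<ge> 0 \<and> ghost p v j k t \<le> y})
   - int (card {(j,k). j < n \<and> k < 0 \<and> ghost p v j k t > y})"

(* position (on the cover) at time t of the m-th lifted agent *)
definition traj :: "nat \<Rightarrow> (nat \<Rightarrow> real) \<Rightarrow> (nat \<Rightarrow> real) \<Rightarrow> int \<Rightarrow> real \<Rightarrow> real" where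
  "traj n p v m t = Inf {y. gcount n p v t y \<ge> m + 1}"

definition rank :: "nat \<Rightarrow> (nat \<Rightarrow> real) \<Rightarrow> nat \<Rightarrow> nat" where
  "rank n p i = card {j. j < n \<and> p j < p i}"

definition atraj :: "nat \<Rightarrow> (nat \<Rightarrow> real) \<Rightarrow> (nat \<Rightarrow> real) \<Rightarrow> nat \<Rightarrow> real \<Rightarrow> real" where
  "atraj n p v i t = traj n p v (int (rank n p i)) t"

definition coll_times :: "nat \<Rightarrow> (nat \<Rightarrow> real) \<Rightarrow> (nat \<Rightarrow> real) \<Rightarrow> nat \<Rightarrow> real set" where
  "coll_times n p v i =
     {t. 0 < t \<and> t \<le> 1 \<and>
        (traj n p v (int (rank n p i) - 1) t = atraj n p v i t \<or>
         traj n p v (int (rank n p i) + 1) t = atraj n p v i t)}"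

(* distance travelled (at unit speed) from the start position to the first
   collision, if any collision happens in the round *)
definition first_coll :: "nat \<Rightarrow> (nat \<Rightarrow> real) \<Rightarrow> (nat \<Rightarrow> real) \<Rightarrow> nat \<Rightarrow> real option" where
  "first_coll n p v i =
     (if coll_times n p v i = {} then None else Some (Inf (coll_times n p v i)))"

(* observation at the end of a round: clockwise distance start -> end, and
   (perceptive model only) the distance to the first collision *)
type_synonym obs = "real \<times> real option"

(* A deterministic algorithm (which may depend on the known N and parity of n,
   since it is chosen after them): given own ID and the history of own
   observations, choose a direction; at the end, decide leader status. *)
type_synonym algo = "(nat \<Rightarrow> obs list \<Rightarrow> dir) \<times> (nat \<Rightarrow> obs list \<Rightarrow> bool)"

definition valid_algo :: "model \<Rightarrow> algo \<Rightarrow> bool" where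
  "valid_algo m A = (\<forall>id h. allowed m (fst A id h))"

definition round_step ::
  "model \<Rightarrow> nat \<Rightarrow> (nat \<Rightarrow> nat) \<Rightarrow> algo \<Rightarrow>
   (nat \<Rightarrow> real) \<times> (nat \<Rightarrow> obs list) \<Rightarrow> (nat \<Rightarrow> real) \<times> (nat \<Rightarrow> obs list)" where
  "round_step m n ids A s =
     (let p = fst s; h = snd s;
          v = (\<lambda>i. vel (fst A (ids i) (h i)));
          ob = (\<lambda>i. (frac (atraj n p v i 1 - p i),
                     if m = Perceptive then first_coll n p v i else None))
      in (\<lambda>i. frac (atraj n p v i 1), \<lambda>i. h i @ [ob i]))"

definition run ::
  "model \<Rightarrow> nat \<Rightarrow> (nat \<Rightarrow> nat) \<Rightarrow> (nat \<Rightarrow> real) \<Rightarrow> algo \<Rightarrow> nat \<Rightarrow>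
   (nat \<Rightarrow> real) \<times> (nat \<Rightarrow> obs list)" where
  "run m n ids p0 A r = (round_step m n ids A ^^ r) (p0, \<lambda>i. [])"

definition valid_instance :: "nat \<Rightarrow> nat \<Rightarrow> (nat \<Rightarrow> nat) \<Rightarrow> (nat \<Rightarrow> real) \<Rightarrow> bool" where
  "valid_instance N n ids p =
     (4 < n \<and> n \<le> N \<and> inj_on ids {..<n} \<and> (\<forall>i<n. 1 \<le> ids i \<and> ids i \<le> N) \<and>
      inj_on p {..<n} \<and> (\<forall>i<n. 0 \<le> p i \<and> p i < 1))"

definition elects :: "model \<Rightarrow> nat \<Rightarrow> (nat \<Rightarrow> nat) \<Rightarrow> (nat \<Rightarrow> real) \<Rightarrow> algo \<Rightarrow> nat \<Rightarrow> bool" where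
  "elects m n ids p0 A T =
     (\<exists>!i. i < n \<and> snd A (ids i) (snd (run m n ids p0 A T) i))"

definition solves :: "model \<Rightarrow> nat \<Rightarrow> bool \<Rightarrow> algo \<Rightarrow> nat \<Rightarrow> bool" where
  "solves m N par A T =
     (valid_algo m A \<and>
      (\<forall>n ids p. valid_instance N n ids p \<and> even n = par \<longrightarrow> elects m n ids p A T))"

end

theory Submission
  imports Defs
begin


lemma nat_aux: "int (nat (a + 1)) - int (nat (- a - 1)) = a + 1" for a :: int by arith

lemma gcount_floor:
  "gcount n p v t y = (\<Sum>j<n. \<lfloor>y - p j - v j * t\<rfloor> + 1)"
proof -
  have A: "{(j,k). j < n \<and> k \<ge> 0 \<and> ghost p v j k t \<le> y} = (SIGMA j:{..<n}. {0..\<lfloor>y - p j - v j * t\<rfloor>})"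
    by (auto simp: ghost_def le_floor_iff algebra_simps)
  have B: "{(j,k). j < n \<and> k < 0 \<and> ghost p v j k t > y} = (SIGMA j:{..<n}. {\<lfloor>y - p j - v j * t\<rfloor>+1..-1})"
    by (auto simp: ghost_def floor_less_iff algebra_simps zle_add1_eq_le[symmetric] simp del: zle_add1_eq_le)
  have cA: "card (SIGMA j:{..<n}. {0..\<lfloor>y - p j - v j * t\<rfloor>}) = (\<Sum>j<n. nat (\<lfloor>y - p j - v j * t\<rfloor> + 1))"
    by (subst card_SigmaI) (auto intro!: sum.cong simp: algebra_simps)
  have cB: "card (SIGMA j:{..<n}. {\<lfloor>y - p j - v j * t\<rfloor>+1..-1}) = (\<Sum>j<n. nat (- \<lfloor>y - p j - v j * t\<rfloor> - 1))"
    by (subst card_SigmaI) (auto intro!: sum.cong simp: algebra_simps)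
  have "gcount n p v t y = int (\<Sum>j<n. nat (\<lfloor>y - p j - v j * t\<rfloor> + 1)) - int (\<Sum>j<n. nat (- \<lfloor>y - p j - v j * t\<rfloor> - 1))"
    unfolding gcount_def A B cA cB by simp
  also have "\<dots> = (\<Sum>j<n. int (nat (\<lfloor>y - p j - v j * t\<rfloor> + 1)) - int (nat (- \<lfloor>y - p j - v j * t\<rfloor> - 1)))"
    by (simp add: of_nat_sum sum_subtractf)
  also have "\<dots> = (\<Sum>j<n. \<lfloor>y - p j - v j * t\<rfloor> + 1)"
    by (simp only: nat_aux)
  finally show ?thesis .
qed

lemma traj_char:
  assumes "gcount n p v t y0 \<ge> m + 1" "(\<Sum>j<n. \<lceil>y0 - p j - v j * t\<rceil>) \<le> m"
  shows "traj n p v m t = y0"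
  unfolding traj_def
proof (rule cInf_eq_minimum)
  show "y0 \<in> {y. m + 1 \<le> gcount n p v t y}" using assms(1) by simp
  fix y assume y: "y \<in> {y. m + 1 \<le> gcount n p v t y}"
  show "y0 \<le> y"
  proof (rule ccontr)
    assume "\<not> y0 \<le> y" hence lt: "y < y0" by simp
    have "gcount n p v t y \<le> (\<Sum>j<n. \<lceil>y0 - p j - v j * t\<rceil>)"
      unfolding gcount_floor
    proof (rule sum_mono)
      fix j
      have "\<lfloor>y - p j - v j * t\<rfloor> < \<lceil>y0 - p j - v j * t\<rceil>"
        by (smt (verit, best) ceiling_correct floor_less_iff lt of_int_floor_le)
      thus "\<lfloor>y - p j - v j * t\<rfloor> + 1 \<le> \<lceil>y0 - p j - v j * t\<rceil>" by simp
    qed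
    with assms(2) y show False by simp
  qed
qed

definition posvalid :: "nat \<Rightarrow> (nat \<Rightarrow> real) \<Rightarrow> bool" where
  "posvalid n p = (inj_on p {..<n} \<and> (\<forall>i<n. 0 \<le> p i \<and> p i < 1))"

lemma rank_lt: assumes "i < n" shows "rank n p i < n"
proof -
  have "{j. j < n \<and> p j < p i} \<subseteq> {..<n} - {i}" by auto
  hence "rank n p i \<le> card ({..<n} - {i})" unfolding rank_def by (intro card_mono) auto
  thus ?thesis using assms by simp
qed

lemma rank_mono: assumes "i < n" "j < n" "p i < p j" shows "rank n p i < rank n p j"
proof -
  have "{l. l < n \<and> p l < p i} \<subset> {l. l < n \<and> p l < p j}" using assms by auto
  thus ?thesis unfolding rank_def by (intro psubset_card_mono) auto
qed

lemma rank_inj: assumes "posvalid n p" shows "inj_on (rank n p) {..<n}"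
proof (rule inj_onI)
  fix i j assume ij: "i \<in> {..<n}" "j \<in> {..<n}" "rank n p i = rank n p j"
  show "i = j"
  proof (rule ccontr)
    assume "i \<noteq> j"
    hence "p i \<noteq> p j" using assms ij unfolding posvalid_def inj_on_def by auto
    hence "p i < p j \<or> p j < p i" by auto
    thus False using rank_mono[of i n j p] rank_mono[of j n i p] ij by auto
  qed
qed

lemma rank_surj: assumes "posvalid n p" "s < n" shows "\<exists>j<n. rank n p j = s"
proof -
  have "rank n p ` {..<n} \<subseteq> {..<n}" using rank_lt by auto
  moreover have "card (rank n p ` {..<n}) = card {..<n}" using card_image[OF rank_inj[OF assms(1)]] by simp
  ultimately have "rank n p ` {..<n} = {..<n}" by (intro card_subset_eq) auto
  thus ?thesis using assms(2) by (metis imageE lessThan_iff)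
qed

lemma floor_diff01: assumes "0 \<le> a" "a < 1" "0 \<le> b" "b < 1"
  shows "\<lfloor>a - b\<rfloor> + 1 = of_bool (b \<le> a)" "\<lceil>a - b\<rceil> = of_bool (b < a)"
proof -
  have "\<lfloor>a - b\<rfloor> = (if b \<le> a then 0 else -1)" using assms by (simp add: floor_eq_iff)
  thus "\<lfloor>a - b\<rfloor> + 1 = of_bool (b \<le> a)" by simp
  have "\<lceil>a - b\<rceil> = (if b < a then 1 else 0)" using assms by (simp add: ceiling_eq_iff)
  thus "\<lceil>a - b\<rceil> = of_bool (b < a)" by simp
qed

lemma traj0:
  assumes pv: "posvalid n p" and j: "j < n" and m: "m = int (rank n p j) + int n * c"
  shows "traj n p v m 0 = p j + of_int c"
proof (rule traj_char)
  have pr: "\<And>l. l < n \<Longrightarrow> 0 \<le> p l \<and> p l < 1" using pv unfolding posvalid_def by auto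
  have "gcount n p v 0 (p j + of_int c) = (\<Sum>l<n. (\<lfloor>p j - p l\<rfloor> + 1) + c)"
    unfolding gcount_floor
  proof (rule sum.cong)
    fix l
    have e: "p j + of_int c - p l - v l * 0 = (p j - p l) + of_int c" by simp
    show "\<lfloor>p j + of_int c - p l - v l * 0\<rfloor> + 1 = \<lfloor>p j - p l\<rfloor> + 1 + c"
      unfolding e floor_add_int by simp
  qed simp
  also have "\<dots> = (\<Sum>l<n. of_bool (p l \<le> p j)) + int n * c"
    by (simp add: sum.distrib floor_diff01 pr j)
  also have "(\<Sum>l<n. of_bool (p l \<le> p j)) = int (card ({..<n} \<inter> {l. p l \<le> p j}))" by simp
  also have "{..<n} \<inter> {l. p l \<le> p j} = insert j {l. l < n \<and> p l < p j}" using j pv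
    unfolding posvalid_def inj_on_def by (auto simp: order_le_less)
  also have "int (card \<dots>) = int (rank n p j) + 1" unfolding rank_def by simp
  finally show "m + 1 \<le> gcount n p v 0 (p j + of_int c)" using m by simp
  have "(\<Sum>l<n. \<lceil>p j + of_int c - p l - v l * 0\<rceil>) = (\<Sum>l<n. \<lceil>p j - p l\<rceil> + c)"
  proof (rule sum.cong)
    fix l
    have e: "p j + of_int c - p l - v l * 0 = (p j - p l) + of_int c" by simp
    show "\<lceil>p j + of_int c - p l - v l * 0\<rceil> = \<lceil>p j - p l\<rceil> + c"
      unfolding e ceiling_add_of_int by simp
  qed simp
  also have "\<dots> = (\<Sum>l<n. of_bool (p l < p j)) + int n * c"
    by (simp add: sum.distrib floor_diff01 pr j)
  also have "(\<Sum>l<n. of_bool (p l < p j)) = int (card ({..<n} \<inter> {l. p l < p j}))" by simp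
  also have "{..<n} \<inter> {l. p l < p j} = {l. l < n \<and> p l < p j}" by auto
  finally show "(\<Sum>l<n. \<lceil>p j + of_int c - p l - v l * 0\<rceil>) \<le> m" using m unfolding rank_def by simp
qed

lemma gcount_t1:
  assumes "\<forall>j<n. v j = of_int (vi j)"
  shows "gcount n p v 1 y = gcount n p v 0 y - (\<Sum>j<n. vi j)"
proof -
  have "gcount n p v 1 y = (\<Sum>j<n. (\<lfloor>y - p j - v j * 0\<rfloor> + 1) - vi j)"
    unfolding gcount_floor
  proof (rule sum.cong)
    fix j assume "j \<in> {..<n}"
    hence e: "y - p j - v j * 1 = (y - p j - v j * 0) + of_int (- vi j)" using assms by simp
    show "\<lfloor>y - p j - v j * 1\<rfloor> + 1 = \<lfloor>y - p j - v j * 0\<rfloor> + 1 - vi j"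
      unfolding e floor_add_int by simp
  qed simp
  thus ?thesis unfolding gcount_floor by (simp add: sum_subtractf)
qed

lemma traj_t1:
  assumes "\<forall>j<n. v j = of_int (vi j)"
  shows "traj n p v m 1 = traj n p v (m + (\<Sum>j<n. vi j)) 0"
  unfolding traj_def gcount_t1[OF assms] by (rule arg_cong[where f=Inf]) auto

lemma mod_shift_iff: fixes r S n :: int assumes "0 \<le> r" "r < n"
  shows "(r + S) mod n = r \<longleftrightarrow> n dvd S"
proof -
  have "(r + S) mod n = r \<longleftrightarrow> (r + S) mod n = r mod n" using assms by simp
  also have "\<dots> \<longleftrightarrow> n dvd S" using mod_eq_dvd_iff[of "r + S" n r] by simp
  finally show ?thesis .
qed

lemma atraj1:
  assumes pv: "posvalid n p" and i: "i < n" and v: "\<forall>j<n. v j = of_int (vi j)"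
  shows "\<exists>j<n. atraj n p v i 1 = p j + of_int ((int (rank n p i) + (\<Sum>j<n. vi j)) div int n)
            \<and> int (rank n p j) = (int (rank n p i) + (\<Sum>j<n. vi j)) mod int n"
proof -
  define M where "M = int (rank n p i) + (\<Sum>j<n. vi j)"
  have np: "0 < int n" using i by simp
  have s: "nat (M mod int n) < n" using np by (simp add: nat_less_iff)
  obtain j where j: "j < n" "rank n p j = nat (M mod int n)" using rank_surj[OF pv s] by auto
  have rj: "int (rank n p j) = M mod int n" using j np by simp
  have "M = int (rank n p j) + int n * (M div int n)" using rj by simp
  hence "traj n p v M 0 = p j + of_int (M div int n)" by (rule traj0[OF pv j(1)])
  moreover have "atraj n p v i 1 = traj n p v M 0" unfolding atraj_def M_def by (rule traj_t1[OF v])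
  ultimately show ?thesis using j rj unfolding M_def by auto
qed

lemma obs_zero:
  assumes pv: "posvalid n p" and i: "i < n" and v: "\<forall>j<n. v j = of_int (vi j)"
  shows "frac (atraj n p v i 1 - p i) = 0 \<longleftrightarrow> int n dvd (\<Sum>j<n. vi j)"
proof -
  obtain j where j: "j < n" "atraj n p v i 1 = p j + of_int ((int (rank n p i) + (\<Sum>j<n. vi j)) div int n)"
     "int (rank n p j) = (int (rank n p i) + (\<Sum>j<n. vi j)) mod int n"
    using atraj1[OF assms] by blast
  have pr: "\<And>l. l < n \<Longrightarrow> 0 \<le> p l \<and> p l < 1" using pv unfolding posvalid_def by auto
  have e: "atraj n p v i 1 - p i = (p j - p i) + of_int ((int (rank n p i) + (\<Sum>j<n. vi j)) div int n)"
    unfolding j(2) by simp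
  have "frac (atraj n p v i 1 - p i) = frac (p j - p i)" unfolding e by (rule frac_add_of_int_right)
  also have "\<dots> = 0 \<longleftrightarrow> p j = p i"
  proof
    assume "frac (p j - p i) = 0"
    then obtain z where z: "p j - p i = of_int z" by (auto simp: frac_eq_0_iff elim: Ints_cases)
    have "real_of_int (-1) < of_int z" "real_of_int z < of_int 1" using pr[OF j(1)] pr[OF i] z by auto
    hence "-1 < z" "z < 1" by (simp only: of_int_less_iff)+
    hence "z = 0" by simp
    thus "p j = p i" using z by simp
  qed simp
  also have "p j = p i \<longleftrightarrow> j = i" using pv j(1) i unfolding posvalid_def inj_on_def by auto
  also have "j = i \<longleftrightarrow> rank n p j = rank n p i"
    using rank_inj[OF pv] j(1) i unfolding inj_on_def by auto
  also have "\<dots> \<longleftrightarrow> (int (rank n p i) + (\<Sum>j<n. vi j)) mod int n = int (rank n p i)"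
    using j(3) by linarith
  also have "\<dots> \<longleftrightarrow> int n dvd (\<Sum>j<n. vi j)" by (rule mod_shift_iff) (use rank_lt[OF i] in auto)
  finally show ?thesis .
qed

lemma newpos_valid:
  assumes pv: "posvalid n p" and v: "\<forall>j<n. v j = of_int (vi j)"
  shows "posvalid n (\<lambda>i. frac (atraj n p v i 1))"
proof -
  have pr: "\<And>l. l < n \<Longrightarrow> 0 \<le> p l \<and> p l < 1" using pv unfolding posvalid_def by auto
  define S where "S = (\<Sum>j<n. vi j)"
  have key: "\<And>i. i < n \<Longrightarrow> \<exists>j<n. frac (atraj n p v i 1) = p j \<and> int (rank n p j) = (int (rank n p i) + S) mod int n"
  proof -
    fix i assume i: "i < n"
    obtain j where j: "j < n" "atraj n p v i 1 = p j + of_int ((int (rank n p i) + S) div int n)"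
       "int (rank n p j) = (int (rank n p i) + S) mod int n"
      using atraj1[OF pv i v] unfolding S_def by blast
    have "frac (atraj n p v i 1) = p j" unfolding j(2) using pr[OF j(1)] by (simp add: frac_eq)
    thus "\<exists>j<n. frac (atraj n p v i 1) = p j \<and> int (rank n p j) = (int (rank n p i) + S) mod int n"
      using j by blast
  qed
  have "inj_on (\<lambda>i. frac (atraj n p v i 1)) {..<n}"
  proof (rule inj_onI)
    fix a b assume a: "a \<in> {..<n}" and b: "b \<in> {..<n}" and e: "frac (atraj n p v a 1) = frac (atraj n p v b 1)"
    obtain ja where ja: "ja < n" "frac (atraj n p v a 1) = p ja" "int (rank n p ja) = (int (rank n p a) + S) mod int n"
      using key a by blast
    obtain jb where jb: "jb < n" "frac (atraj n p v b 1) = p jb" "int (rank n p jb) = (int (rank n p b) + S) mod int n"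
      using key b by blast
    have "ja = jb" using e ja jb pv unfolding posvalid_def inj_on_def by auto
    hence "(int (rank n p a) + S) mod int n = (int (rank n p b) + S) mod int n" using ja jb by simp
    hence "int n dvd (int (rank n p a) + S) - (int (rank n p b) + S)" using mod_eq_dvd_iff by blast
    hence "int n dvd int (rank n p a) - int (rank n p b)" by simp
    hence "int (rank n p a) mod int n = int (rank n p b) mod int n" using mod_eq_dvd_iff by blast
    hence "rank n p a = rank n p b" using rank_lt[of a n p] rank_lt[of b n p] a b by simp
    thus "a = b" using rank_inj[OF pv] a b unfolding inj_on_def by auto
  qed
  moreover have "\<forall>i<n. 0 \<le> frac (atraj n p v i 1) \<and> frac (atraj n p v i 1) < 1"
    by (simp add: frac_lt_1)
  ultimately show ?thesis unfolding posvalid_def by simp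
qed

lemma sum0:
  assumes pv: "posvalid n p" and i: "i < n"
  shows "(\<Sum>l<n. \<lfloor>p i - p l\<rfloor> + 1) = int (rank n p i) + 1"
        "(\<Sum>l<n. \<lceil>p i - p l\<rceil>) = int (rank n p i)"
proof -
  have pr: "\<And>l. l < n \<Longrightarrow> 0 \<le> p l \<and> p l < 1" using pv unfolding posvalid_def by auto
  have "(\<Sum>l<n. \<lfloor>p i - p l\<rfloor> + 1) = (\<Sum>l<n. of_bool (p l \<le> p i))"
    by (rule sum.cong) (simp_all add: floor_diff01 pr i)
  also have "\<dots> = int (card ({..<n} \<inter> {l. p l \<le> p i}))" by simp
  also have "{..<n} \<inter> {l. p l \<le> p i} = insert i {l. l < n \<and> p l < p i}" using i pv
    unfolding posvalid_def inj_on_def by (auto simp: order_le_less)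
  also have "int (card \<dots>) = int (rank n p i) + 1" unfolding rank_def by simp
  finally show "(\<Sum>l<n. \<lfloor>p i - p l\<rfloor> + 1) = int (rank n p i) + 1" .
  have "(\<Sum>l<n. \<lceil>p i - p l\<rceil>) = (\<Sum>l<n. of_bool (p l < p i))"
    by (rule sum.cong) (simp_all add: floor_diff01 pr i)
  also have "\<dots> = int (card ({..<n} \<inter> {l. p l < p i}))" by simp
  also have "{..<n} \<inter> {l. p l < p i} = {l. l < n \<and> p l < p i}" by auto
  finally show "(\<Sum>l<n. \<lceil>p i - p l\<rceil>) = int (rank n p i)" unfolding rank_def by simp
qed

lemma traj_decomp:
  assumes pv: "posvalid n p" and n: "0 < n"
  shows "\<exists>j<n. \<exists>c. m = int (rank n p j) + int n * c"
proof -
  have s: "nat (m mod int n) < n" using n by (simp add: nat_less_iff)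
  obtain j where j: "j < n" "rank n p j = nat (m mod int n)" using rank_surj[OF pv s] by auto
  have "int (rank n p j) = m mod int n" using j n by simp
  hence "m = int (rank n p j) + int n * (m div int n)" by simp
  thus ?thesis using j by blast
qed

lemma traj_unif:
  assumes pv: "posvalid n p" and j: "j < n" and m: "m = int (rank n p j) + int n * c"
    and v: "\<forall>l<n. v l = w"
  shows "traj n p v m t = p j + of_int c + w * t"
proof (rule traj_char)
  have e: "\<And>l. l < n \<Longrightarrow> p j + of_int c + w * t - p l - v l * t = (p j - p l) + of_int c" using v by simp
  have "gcount n p v t (p j + of_int c + w * t) = (\<Sum>l<n. (\<lfloor>p j - p l\<rfloor> + 1) + c)"
    unfolding gcount_floor by (rule sum.cong) (simp_all only: e floor_add_int lessThan_iff, simp)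
  also have "\<dots> = int (rank n p j) + 1 + int n * c"
    using sum.distrib[of "\<lambda>l. \<lfloor>p j - p l\<rfloor> + 1" "\<lambda>l. c" "{..<n}"] sum0(1)[OF pv j] by simp
  finally show "m + 1 \<le> gcount n p v t (p j + of_int c + w * t)" using m by simp
  have "(\<Sum>l<n. \<lceil>p j + of_int c + w * t - p l - v l * t\<rceil>) = (\<Sum>l<n. \<lceil>p j - p l\<rceil> + c)"
    by (rule sum.cong) (simp_all only: e ceiling_add_of_int lessThan_iff)
  also have "\<dots> = int (rank n p j) + int n * c" by (simp only: sum.distrib sum0[OF pv j]) simp
  finally show "(\<Sum>l<n. \<lceil>p j + of_int c + w * t - p l - v l * t\<rceil>) \<le> m" using m by simp
qed

lemma pos_int_eq:
  assumes "0 \<le> (a::real)" "a < 1" "0 \<le> b" "b < 1" "a + of_int c = b + of_int d"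
  shows "a = b \<and> c = d"
proof -
  have "real_of_int (-1) < of_int (d - c)" "real_of_int (d - c) < of_int 1" using assms by auto
  hence "-1 < d - c" "d - c < 1" by (simp only: of_int_less_iff)+
  hence cd: "c = d" by simp
  have "a = b" using assms(5) unfolding cd by simp
  with cd show ?thesis by simp
qed

lemma unif_nocoll:
  assumes pv: "posvalid n p" and i: "i < n" and v: "\<forall>l<n. v l = w"
  shows "coll_times n p v i = {}"
proof -
  have n: "0 < n" using i by simp
  have pr: "\<And>l. l < n \<Longrightarrow> 0 \<le> p l \<and> p l < 1" using pv unfolding posvalid_def by auto
  have ti: "traj n p v (int (rank n p i)) t = p i + w * t" for t
    using traj_unif[OF pv i _ v, of "int (rank n p i)" 0] by simp
  have ne: "traj n p v m t \<noteq> p i + w * t" if "m \<noteq> int (rank n p i)" for m t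
  proof
    assume eq: "traj n p v m t = p i + w * t"
    obtain j c where jc: "j < n" "m = int (rank n p j) + int n * c" using traj_decomp[OF pv n] by blast
    have "p j + of_int c = p i + of_int 0" using eq traj_unif[OF pv jc(1) jc(2) v, of t] by simp
    hence "p j = p i \<and> c = 0" using pos_int_eq pr[OF jc(1)] pr[OF i] by blast
    hence "j = i" "c = 0" using pv jc(1) i unfolding posvalid_def inj_on_def by auto
    thus False using jc that by simp
  qed
  show ?thesis unfolding coll_times_def atraj_def using ne[of "int (rank n p i) - 1"] ne[of "int (rank n p i) + 1"] ti
    by auto
qed

lemma sum_bump:
  fixes f g :: "nat \<Rightarrow> int"
  assumes "finite A" "j \<in> A" "\<forall>l\<in>A. g l \<le> f l" "g j + 1 \<le> f j"
  shows "sum g A + 1 \<le> sum f A"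
proof -
  have "sum g (A - {j}) \<le> sum f (A - {j})" using assms(3) by (intro sum_mono) auto
  thus ?thesis using assms sum.remove[of A j f] sum.remove[of A j g] by simp
qed

lemma nonint_fc: assumes "-1 < (x::real)" "x < 1" "x \<noteq> 0"
  shows "\<lceil>x\<rceil> = \<lfloor>x\<rfloor> + 1" "of_int \<lfloor>x\<rfloor> < x" "x < of_int \<lceil>x\<rceil>"
proof -
  consider "0 < x" | "x < 0" using assms by linarith
  hence "(\<lceil>x\<rceil> = 1 \<and> \<lfloor>x\<rfloor> = 0 \<and> 0 < x) \<or> (\<lceil>x\<rceil> = 0 \<and> \<lfloor>x\<rfloor> = -1 \<and> x < 0)"
    by cases (use assms in \<open>auto simp: ceiling_eq_iff floor_eq_iff\<close>)
  thus "\<lceil>x\<rceil> = \<lfloor>x\<rfloor> + 1" "of_int \<lfloor>x\<rfloor> < x" "x < of_int \<lceil>x\<rceil>" using assms by auto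
qed

lemma half_aux: "(x::real) < f + 1 \<Longrightarrow> f < x \<Longrightarrow> 0 < (x - f)/2 \<and> (x - f)/2 < 1/2" by auto

lemma mixed_coll:
  assumes pv: "posvalid n p" and i: "i < n" and v01: "\<forall>l<n. v l = 1 \<or> v l = -1"
    and ex: "\<exists>j<n. v j \<noteq> v i"
  shows "coll_times n p v i \<noteq> {}"
proof -
  have pr: "\<And>l. l < n \<Longrightarrow> 0 \<le> p l \<and> p l < 1" using pv unfolding posvalid_def by auto
  define a where "a l = p i - p l" for l
  define r where "r = int (rank n p i)"
  have ne0: "a l \<noteq> 0" if "l < n" "l \<noteq> i" for l
    using pv that i unfolding posvalid_def inj_on_def a_def by auto
  have ab: "-1 < a l" "a l < 1" if "l < n" for l using pr[OF that] pr[OF i] unfolding a_def by auto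
  note fc = nonint_fc[OF ab ne0]
  have s0f: "(\<Sum>l<n. \<lfloor>a l\<rfloor> + 1) = r + 1" and s0c: "(\<Sum>l<n. \<lceil>a l\<rceil>) = r"
    using sum0[OF pv i] unfolding a_def r_def by auto
  consider "v i = 1" | "v i = -1" using v01 i by blast
  thus ?thesis
  proof cases
    case 1
    define J where "J = {l. l < n \<and> v l = -1}"
    have Jf: "finite J" unfolding J_def by simp
    have Jne: "J \<noteq> {}" using ex v01 1 unfolding J_def by force
    have iJ: "l \<in> J \<Longrightarrow> l < n \<and> l \<noteq> i \<and> v l = -1" for l using 1 unfolding J_def by auto
    define d where "d l = (of_int \<lceil>a l\<rceil> - a l) / 2" for l
    define t1 where "t1 = Min (d ` J)"
    have "t1 \<in> d ` J" unfolding t1_def using Jf Jne by (intro Min_in) auto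
    then obtain js where js: "js \<in> J" "t1 = d js" by auto
    have t1le: "t1 \<le> d l" if "l \<in> J" for l unfolding t1_def using Jf that by simp
    have dpos: "0 < d l \<and> d l < 1/2" if "l \<in> J" for l
      using fc[of l] iJ[OF that] unfolding d_def by auto
    have t1pos: "0 < t1" "t1 \<le> 1" using dpos[OF js(1)] js(2) by auto
    define y1 where "y1 = p i + t1"
    have ex1: "y1 - p l - v l * t1 = a l + (1 - v l) * t1" for l unfolding y1_def a_def by (simp add: algebra_simps)
    have G: "r + 2 \<le> gcount n p v t1 y1"
    proof -
      have "(\<Sum>l<n. \<lfloor>a l\<rfloor> + 1) + 1 \<le> (\<Sum>l<n. \<lfloor>y1 - p l - v l * t1\<rfloor> + 1)"
      proof (rule sum_bump)
        show "js \<in> {..<n}" using iJ[OF js(1)] by simp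
        show "\<forall>l\<in>{..<n}. \<lfloor>a l\<rfloor> + 1 \<le> \<lfloor>y1 - p l - v l * t1\<rfloor> + 1"
        proof
          fix l assume l: "l \<in> {..<n}"
          have "a l \<le> a l + (1 - v l) * t1" using v01 l t1pos by auto
          thus "\<lfloor>a l\<rfloor> + 1 \<le> \<lfloor>y1 - p l - v l * t1\<rfloor> + 1" unfolding ex1 by (simp add: floor_mono)
        qed
        have e1: "y1 - p js - v js * t1 = a js + 2 * t1" using ex1[of js] iJ[OF js(1)] by simp
        have e2: "2 * t1 = of_int \<lceil>a js\<rceil> - a js" using js(2) unfolding d_def by simp
        have "y1 - p js - v js * t1 = of_int \<lceil>a js\<rceil>" using e1 e2 by linarith
        thus "\<lfloor>a js\<rfloor> + 1 + 1 \<le> \<lfloor>y1 - p js - v js * t1\<rfloor> + 1" using fc[of js] iJ[OF js(1)] by simp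
      qed simp
      thus ?thesis unfolding gcount_floor s0f by simp
    qed
    have C: "(\<Sum>l<n. \<lceil>y1 - p l - v l * t1\<rceil>) = r"
    proof -
      have "(\<Sum>l<n. \<lceil>y1 - p l - v l * t1\<rceil>) = (\<Sum>l<n. \<lceil>a l\<rceil>)"
      proof (rule sum.cong)
        fix l assume l: "l \<in> {..<n}"
        show "\<lceil>y1 - p l - v l * t1\<rceil> = \<lceil>a l\<rceil>"
        proof (cases "l \<in> J")
          case True
          have "2 * t1 \<le> of_int \<lceil>a l\<rceil> - a l" using t1le[OF True] unfolding d_def by simp
          moreover have "of_int \<lceil>a l\<rceil> - 1 < a l" using ceiling_correct[of "a l"] by simp
          ultimately show ?thesis unfolding ex1 using iJ[OF True] t1pos
            by (simp add: ceiling_eq_iff)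
        next
          case False
          hence "v l = 1" using v01 l unfolding J_def by auto
          thus ?thesis unfolding ex1 by simp
        qed
      qed simp
      thus ?thesis using s0c by simp
    qed
    have T0: "traj n p v r t1 = y1" by (rule traj_char) (use G C in auto)
    have T1: "traj n p v (r + 1) t1 = y1" by (rule traj_char) (use G C in auto)
    have "t1 \<in> coll_times n p v i" unfolding coll_times_def atraj_def
      using T0 T1 t1pos unfolding r_def by auto
    thus ?thesis by auto
  next
    case 2
    define J where "J = {l. l < n \<and> v l = 1}"
    have Jf: "finite J" unfolding J_def by simp
    have Jne: "J \<noteq> {}" using ex v01 2 unfolding J_def by force
    have iJ: "l \<in> J \<Longrightarrow> l < n \<and> l \<noteq> i \<and> v l = 1" for l using 2 unfolding J_def by auto
    define d where "d l = (a l - of_int \<lfloor>a l\<rfloor>) / 2" for l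
    define t1 where "t1 = Min (d ` J)"
    have "t1 \<in> d ` J" unfolding t1_def using Jf Jne by (intro Min_in) auto
    then obtain js where js: "js \<in> J" "t1 = d js" by auto
    have t1le: "t1 \<le> d l" if "l \<in> J" for l unfolding t1_def using Jf that by simp
    have dpos: "0 < d l \<and> d l < 1/2" if "l \<in> J" for l
    proof -
      have "a l < of_int \<lfloor>a l\<rfloor> + 1" using floor_correct[of "a l"] by linarith
      moreover have "of_int \<lfloor>a l\<rfloor> < a l" using fc[of l] iJ[OF that] by auto
      ultimately show ?thesis unfolding d_def using half_aux by blast
    qed
    have t1pos: "0 < t1" "t1 \<le> 1" using dpos[OF js(1)] js(2) by auto
    define y1 where "y1 = p i - t1"
    have ex1: "y1 - p l - v l * t1 = a l - (1 + v l) * t1" for l unfolding y1_def a_def by (simp add: algebra_simps)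
    have G: "gcount n p v t1 y1 = r + 1"
    proof -
      have "(\<Sum>l<n. \<lfloor>y1 - p l - v l * t1\<rfloor> + 1) = (\<Sum>l<n. \<lfloor>a l\<rfloor> + 1)"
      proof (rule sum.cong)
        fix l assume l: "l \<in> {..<n}"
        show "\<lfloor>y1 - p l - v l * t1\<rfloor> + 1 = \<lfloor>a l\<rfloor> + 1"
        proof (cases "l \<in> J")
          case True
          have "2 * t1 \<le> a l - of_int \<lfloor>a l\<rfloor>" using t1le[OF True] unfolding d_def by simp
          moreover have "a l < of_int \<lfloor>a l\<rfloor> + 1" using floor_correct[of "a l"] by simp
          ultimately have b1: "of_int \<lfloor>a l\<rfloor> \<le> a l - 2 * t1" "a l - 2 * t1 < of_int \<lfloor>a l\<rfloor> + 1"
            using t1pos by linarith+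
          have "\<lfloor>a l - 2 * t1\<rfloor> = \<lfloor>a l\<rfloor>" by (intro floor_eq_iff[THEN iffD2] conjI b1)
          thus ?thesis unfolding ex1 using iJ[OF True] by simp
        next
          case False
          hence "v l = -1" using v01 l unfolding J_def by auto
          thus ?thesis unfolding ex1 by simp
        qed
      qed simp
      thus ?thesis unfolding gcount_floor s0f by simp
    qed
    have C: "(\<Sum>l<n. \<lceil>y1 - p l - v l * t1\<rceil>) + 1 \<le> r"
    proof -
      have "(\<Sum>l<n. \<lceil>y1 - p l - v l * t1\<rceil>) + 1 \<le> (\<Sum>l<n. \<lceil>a l\<rceil>)"
      proof (rule sum_bump)
        show "js \<in> {..<n}" using iJ[OF js(1)] by simp
        show "\<forall>l\<in>{..<n}. \<lceil>y1 - p l - v l * t1\<rceil> \<le> \<lceil>a l\<rceil>"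
        proof
          fix l assume l: "l \<in> {..<n}"
          have "a l - (1 + v l) * t1 \<le> a l" using v01 l t1pos by auto
          thus "\<lceil>y1 - p l - v l * t1\<rceil> \<le> \<lceil>a l\<rceil>" unfolding ex1 by (simp add: ceiling_mono)
        qed
        have e1: "y1 - p js - v js * t1 = a js - 2 * t1" using ex1[of js] iJ[OF js(1)] by simp
        have e2: "2 * t1 = a js - of_int \<lfloor>a js\<rfloor>" using js(2) unfolding d_def by simp
        have "y1 - p js - v js * t1 = of_int \<lfloor>a js\<rfloor>" using e1 e2 by linarith
        thus "\<lceil>y1 - p js - v js * t1\<rceil> + 1 \<le> \<lceil>a js\<rceil>" using fc[of js] iJ[OF js(1)] by simp
      qed simp
      thus ?thesis using s0c by simp
    qed
    have T0: "traj n p v r t1 = y1" by (rule traj_char) (use G C in auto)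
    have T1: "traj n p v (r - 1) t1 = y1" by (rule traj_char) (use G C in auto)
    have "t1 \<in> coll_times n p v i" unfolding coll_times_def atraj_def
      using T0 T1 t1pos unfolding r_def by auto
    thus ?thesis by auto
  qed
qed

lemma vel_int: "vel d = of_int \<lfloor>vel d\<rfloor>"
  by (cases d) (auto simp: vel_def)

fun Fs :: "(bool list \<Rightarrow> bool) \<Rightarrow> nat \<Rightarrow> bool list" where
  "Fs Phi 0 = []"
| "Fs Phi (Suc r) = Fs Phi r @ [Phi (Fs Phi r)]"

lemma length_Fs[simp]: "length (Fs Phi r) = r" by (induction r) auto

lemma run_inv:
  assumes A: "fst A = (\<lambda>x h. D x (map fl h))"
    and pv0: "posvalid n p0"
    and H: "\<And>p F v i. posvalid n p \<Longrightarrow> (\<forall>j<n. v j = vel (D (ids j) F)) \<Longrightarrow> i < n \<Longrightarrow>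
          fl (frac (atraj n p v i 1 - p i), if m = Perceptive then first_coll n p v i else None) = Phi F"
  shows "posvalid n (fst (run m n ids p0 A r)) \<and> (\<forall>i<n. map fl (snd (run m n ids p0 A r) i) = Fs Phi r)"
proof (induction r)
  case 0
  then show ?case using pv0 by (simp add: run_def)
next
  case (Suc r)
  obtain p h where ph: "run m n ids p0 A r = (p, h)" by fastforce
  have pv: "posvalid n p" and hh: "\<forall>i<n. map fl (h i) = Fs Phi r" using Suc ph by auto
  define v where "v = (\<lambda>i. vel (fst A (ids i) (h i)))"
  have vD: "\<forall>j<n. v j = vel (D (ids j) (Fs Phi r))" using hh unfolding v_def A by auto
  have vi: "\<forall>j<n. v j = of_int \<lfloor>v j\<rfloor>" unfolding v_def using vel_int by auto
  have rs: "run m n ids p0 A (Suc r) = round_step m n ids A (p, h)" using ph by (simp add: run_def)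
  show ?case unfolding rs round_step_def Let_def fst_conv snd_conv v_def[symmetric]
  proof (intro conjI allI impI)
    show "posvalid n (\<lambda>i. frac (atraj n p v i 1))" by (rule newpos_valid[OF pv vi])
    fix i assume i: "i < n"
    show "map fl (h i @ [(frac (atraj n p v i 1 - p i), if m = Perceptive then first_coll n p v i else None)]) = Fs Phi (Suc r)"
      using hh i H[OF pv vD i] by simp
  qed
qed


lemma obs_zero':
  assumes "posvalid n p" "i < n" "\<forall>j<n. v j = vel (d j)"
  shows "(frac (atraj n p v i 1 - p i) = 0) = (int n dvd (\<Sum>j<n. \<lfloor>vel (d j)\<rfloor>))"
proof -
  have "\<forall>j<n. v j = of_int \<lfloor>vel (d j)\<rfloor>" using assms(3) vel_int by auto
  from obs_zero[OF assms(1,2) this] show ?thesis .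
qed

lemma sum_RI: "(\<Sum>j<n. \<lfloor>vel (if P j then Right else Idle)\<rfloor>) = int (card {j. j < n \<and> P j})" for n :: nat
proof -
  have "(\<Sum>j<n. \<lfloor>vel (if P j then Right else Idle)\<rfloor>) = (\<Sum>j<n. of_bool (P j))"
    by (rule sum.cong) (auto simp: vel_def)
  also have "\<dots> = int (card ({..<n} \<inter> {j. P j}))" by (rule sum_of_bool_eq) simp_all
  also have "{..<n} \<inter> {j. P j} = {j. j < n \<and> P j}" by auto
  finally show ?thesis .
qed

lemma floor_m1: "\<lfloor>- 1 :: real\<rfloor> = - 1" by (simp add: floor_eq_iff)

lemma sum_RL: "(\<Sum>j<n. \<lfloor>vel (if P j then Right else Left)\<rfloor>) = 2 * int (card {j. j < n \<and> P j}) - int n" for n :: nat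
proof -
  have "(\<Sum>j<n. \<lfloor>vel (if P j then Right else Left)\<rfloor>) = (\<Sum>j<n. 2 * of_bool (P j) - 1)"
    by (rule sum.cong) (auto simp: vel_def floor_m1)
  also have "\<dots> = 2 * (\<Sum>j<n. of_bool (P j)) - int n" by (simp add: sum_subtractf sum_distrib_left)
  also have "(\<Sum>j<n. of_bool (P j)) = int (card ({..<n} \<inter> {j. P j}))" by (rule sum_of_bool_eq) simp_all
  also have "{..<n} \<inter> {j. P j} = {j. j < n \<and> P j}" by auto
  finally show ?thesis .
qed

lemma dvd_card_iff:
  assumes "0 < n" "B \<subseteq> {..<n}"
  shows "int n dvd int (card B) \<longleftrightarrow> B = {} \<or> B = {..<n}"
proof
  have le: "card B \<le> n" using card_mono[OF _ assms(2)] by simp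
  assume "int n dvd int (card B)"
  hence "n dvd card B" by simp
  then obtain k where k: "card B = n * k" by blast
  have "k = 0 \<or> k = 1" using le k assms(1) by (metis One_nat_def le_Suc_eq less_one mult_le_cancel1 mult_0_right nat_mult_1_right zero_less_iff_neq_zero linorder_not_le)
  thus "B = {} \<or> B = {..<n}"
  proof
    assume "k = 0" thus ?thesis using k assms(2) finite_subset by fastforce
  next
    assume "k = 1" hence "card B = card {..<n}" using k by simp
    thus ?thesis using assms(2) by (metis card_subset_eq finite_lessThan)
  qed
next
  assume "B = {} \<or> B = {..<n}" thus "int n dvd int (card B)" by auto
qed


lemma flagP:
  assumes pv: "posvalid n p" and i: "i < n" and v: "\<forall>j<n. v j = vel (d j)"
    and d: "\<forall>j<n. d j = Right \<or> d j = Left"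
  shows "(frac (atraj n p v i 1 - p i) = 0 \<and> first_coll n p v i = None) = (\<forall>j<n. d j = d i)"
proof
  assume u: "\<forall>j<n. d j = d i"
  have "\<forall>l<n. v l = vel (d i)" using u v by auto
  hence "coll_times n p v i = {}" by (rule unif_nocoll[OF pv i])
  hence "first_coll n p v i = None" unfolding first_coll_def by simp
  moreover have "(\<Sum>j<n. \<lfloor>vel (d j)\<rfloor>) = int n * \<lfloor>vel (d i)\<rfloor>" using u by simp
  hence "frac (atraj n p v i 1 - p i) = 0" using obs_zero'[OF pv i v] by simp
  ultimately show "frac (atraj n p v i 1 - p i) = 0 \<and> first_coll n p v i = None" by simp
next
  assume f: "frac (atraj n p v i 1 - p i) = 0 \<and> first_coll n p v i = None"
  show "\<forall>j<n. d j = d i"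
  proof (rule ccontr)
    assume "\<not> (\<forall>j<n. d j = d i)"
    then obtain j where j: "j < n" "d j \<noteq> d i" by auto
    have "v j \<noteq> v i" using d j i v by (cases "d i"; cases "d j"; auto simp: vel_def)
    moreover have "\<forall>l<n. v l = 1 \<or> v l = -1" using d v by (auto simp: vel_def)
    ultimately have "coll_times n p v i \<noteq> {}" using mixed_coll[OF pv i] j by blast
    thus False using f unfolding first_coll_def by (auto split: if_splits)
  qed
qed

lemma odd_dvd_iff:
  assumes "odd n" shows "int n dvd (2 * c - int n) \<longleftrightarrow> int n dvd c"
proof -
  have "int n dvd (2 * c - int n) \<longleftrightarrow> int n dvd 2 * c" by (rule dvd_diff_left_iff) simp
  also have "\<dots> \<longleftrightarrow> int n dvd c"
  proof
    assume "int n dvd 2 * c"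
    moreover have "coprime (int n) 2" using assms by simp
    ultimately show "int n dvd c" using coprime_dvd_mult_right_iff by blast
  qed simp
  finally show ?thesis .
qed

definition candB :: "nat \<Rightarrow> bool list \<Rightarrow> bool" where
  "candB x F = (\<forall>k<length F. \<not> F ! k \<longrightarrow> bit (x - 1) k)"

definition movB :: "nat \<Rightarrow> bool list \<Rightarrow> bool" where
  "movB x F = (candB x F \<and> bit (x - 1) (length F))"

definition PhiB :: "(nat \<Rightarrow> nat) \<Rightarrow> nat \<Rightarrow> bool list \<Rightarrow> bool" where
  "PhiB ids n F = ({j. j < n \<and> movB (ids j) F} = {} \<or> {j. j < n \<and> movB (ids j) F} = {..<n})"

lemma candB_snoc: "candB x (F @ [b]) = (candB x F \<and> (\<not> b \<longrightarrow> bit (x - 1) (length F)))"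
  unfolding candB_def by (auto simp: nth_append less_Suc_eq)

lemma bits_eq:
  fixes a b M :: nat
  assumes "a < 2 ^ M" "b < 2 ^ M" "\<forall>k<M. bit a k = bit b k"
  shows "a = b"
proof -
  have "take_bit M a = take_bit M b" using assms(3) by (auto intro!: bit_eqI simp: bit_take_bit_iff)
  thus ?thesis using take_bit_nat_eq_self[OF assms(1)] take_bit_nat_eq_self[OF assms(2)] by simp
qed

lemma candB_inv:
  shows "(\<exists>j<n. candB (ids j) (Fs (PhiB ids n) r)) \<or> n = 0"
    "\<forall>j<n. \<forall>j'<n. candB (ids j) (Fs (PhiB ids n) r) \<longrightarrow> candB (ids j') (Fs (PhiB ids n) r)
        \<longrightarrow> (\<forall>k<r. bit (ids j - 1) k = bit (ids j' - 1) k)"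
proof (induction r)
  case 0
  { case 1 show ?case unfolding candB_def by auto }
  { case 2 show ?case by simp }
next
  case (Suc r)
  define F where "F = Fs (PhiB ids n) r"
  define B where "B = {j. j < n \<and> movB (ids j) F}"
  have FS: "Fs (PhiB ids n) (Suc r) = F @ [B = {} \<or> B = {..<n}]"
    unfolding F_def B_def by (simp add: PhiB_def)
  have lF: "length F = r" unfolding F_def by simp
  { case 1
    show ?case
    proof (cases "B = {} \<or> B = {..<n}")
      case True
      thus ?thesis using Suc.IH(1) unfolding FS candB_snoc F_def by auto
    next
      case False
      then obtain j where "j \<in> B" by auto
      thus ?thesis unfolding FS candB_snoc B_def movB_def by auto
    qed }
  { case 2
    show ?case
    proof (intro allI impI)
      fix j j' k assume j: "j < n" and j': "j' < n" and cj: "candB (ids j) (Fs (PhiB ids n) (Suc r))"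
        and cj': "candB (ids j') (Fs (PhiB ids n) (Suc r))" and k: "k < Suc r"
      have c0: "candB (ids j) F" "candB (ids j') F" using cj cj' unfolding FS candB_snoc by auto
      show "bit (ids j - 1) k = bit (ids j' - 1) k"
      proof (cases "k < r")
        case True thus ?thesis using Suc.IH(2) j j' c0 unfolding F_def by blast
      next
        case False hence kr: "k = r" using k by simp
        show ?thesis
        proof (cases "B = {}")
          case True
          hence "\<not> bit (ids j - 1) r" "\<not> bit (ids j' - 1) r" using j j' c0 lF unfolding B_def movB_def by auto
          thus ?thesis using kr by simp
        next
          case Bne: False
          show ?thesis
          proof (cases "B = {..<n}")
            case True
            hence "j \<in> B" "j' \<in> B" using j j' by auto
            thus ?thesis using kr lF unfolding B_def movB_def by auto
          next
            case False
            hence "bit (ids j - 1) r" "bit (ids j' - 1) r" using cj cj' Bne lF unfolding FS candB_snoc by auto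
            thus ?thesis using kr by simp
          qed
        qed
      qed
    qed }
qed

lemma bit_unique:
  assumes inj: "inj_on ids {..<n}" and rng: "\<forall>i<n. 1 \<le> ids i \<and> ids i \<le> 2 ^ M" and n: "0 < n"
  shows "\<exists>!i. i < n \<and> candB (ids i) (Fs (PhiB ids n) M)"
proof -
  obtain j where j: "j < n" "candB (ids j) (Fs (PhiB ids n) M)" using candB_inv(1)[of n ids M] n by auto
  have "i = j" if i: "i < n" "candB (ids i) (Fs (PhiB ids n) M)" for i
  proof -
    have "\<forall>k<M. bit (ids i - 1) k = bit (ids j - 1) k" using candB_inv(2)[of n ids M] i j by blast
    hence "ids i - 1 = ids j - 1" using rng i j by (intro bits_eq[of _ M]) auto
    moreover have "1 \<le> ids i" "1 \<le> ids j" using rng i j by auto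
    ultimately have "ids i = ids j" by arith
    thus ?thesis using inj i j unfolding inj_on_def by auto
  qed
  thus ?thesis using j by blast
qed

definition algoB :: "(obs \<Rightarrow> bool) \<Rightarrow> dir \<Rightarrow> dir \<Rightarrow> algo" where
  "algoB fl d1 d2 = ((\<lambda>x h. if movB x (map fl h) then d1 else d2), (\<lambda>x h. candB x (map fl h)))"

lemma posvalid_inst: "valid_instance N n ids p \<Longrightarrow> posvalid n p"
  unfolding valid_instance_def posvalid_def by auto

lemma solves_bit:
  assumes va: "valid_algo m (algoB fl d1 d2)" and NM: "N \<le> 2 ^ M"
    and H: "\<And>n ids p F v i. 4 < n \<Longrightarrow> even n = par \<Longrightarrow> posvalid n p \<Longrightarrow>
        (\<forall>j<n. v j = vel (if movB (ids j) F then d1 else d2)) \<Longrightarrow> i < n \<Longrightarrow>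
        fl (frac (atraj n p v i 1 - p i), if m = Perceptive then first_coll n p v i else None) = PhiB ids n F"
  shows "solves m N par (algoB fl d1 d2) M"
  unfolding solves_def
proof (intro conjI allI impI)
  show "valid_algo m (algoB fl d1 d2)" by (rule va)
  fix n ids p assume vi: "valid_instance N n ids p \<and> even n = par"
  have n4: "4 < n" and inj: "inj_on ids {..<n}" and rng: "\<forall>i<n. 1 \<le> ids i \<and> ids i \<le> N"
    using vi unfolding valid_instance_def by auto
  have ri: "posvalid n (fst (run m n ids p (algoB fl d1 d2) M)) \<and>
      (\<forall>i<n. map fl (snd (run m n ids p (algoB fl d1 d2) M) i) = Fs (PhiB ids n) M)"
  proof (rule run_inv[where D = "\<lambda>x F. if movB x F then d1 else d2"])
    show "fst (algoB fl d1 d2) = (\<lambda>x h. if movB x (map fl h) then d1 else d2)" by (simp add: algoB_def)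
    show "posvalid n p" using vi posvalid_inst by blast
    fix p' F v i assume "posvalid n p'" "\<forall>j<n. v j = vel (if movB (ids j) F then d1 else d2)" "i < n"
    thus "fl (frac (atraj n p' v i 1 - p' i), if m = Perceptive then first_coll n p' v i else None) = PhiB ids n F"
      using H[OF n4] vi by blast
  qed
  have rng2: "\<forall>i<n. 1 \<le> ids i \<and> ids i \<le> 2 ^ M" using rng NM by force
  have "\<exists>!i. i < n \<and> candB (ids i) (Fs (PhiB ids n) M)" by (rule bit_unique[OF inj rng2]) (use n4 in simp)
  moreover have "\<And>i. i < n \<Longrightarrow> snd (algoB fl d1 d2) (ids i) (snd (run m n ids p (algoB fl d1 d2) M) i)
      = candB (ids i) (Fs (PhiB ids n) M)" using ri by (simp add: algoB_def)
  ultimately show "elects m n ids p (algoB fl d1 d2) M" unfolding elects_def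
    by (metis (no_types, lifting))
qed

lemma PhiB_dvd: assumes "0 < n"
  shows "int n dvd int (card {j. j < n \<and> movB (ids j) F}) \<longleftrightarrow> PhiB ids n F"
  unfolding PhiB_def by (rule dvd_card_iff[OF assms]) auto

lemma lazy_ok: "N \<le> 2 ^ M \<Longrightarrow> solves Lazy N par (algoB (\<lambda>ob. fst ob = 0) Right Idle) M"
proof (rule solves_bit)
  show "valid_algo Lazy (algoB (\<lambda>ob. fst ob = 0) Right Idle)" by (simp add: valid_algo_def allowed_def)
  fix n ids p F v i assume "4 < n" "posvalid n p" and v: "\<forall>j<n. v j = vel (if movB (ids j) F then Right else Idle)" and i: "i < n"
  have "(frac (atraj n p v i 1 - p i) = 0) = (int n dvd (\<Sum>j<n. \<lfloor>vel (if movB (ids j) F then Right else Idle)\<rfloor>))"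
    by (rule obs_zero'[OF \<open>posvalid n p\<close> i v])
  also have "\<dots> = PhiB ids n F" unfolding sum_RI using PhiB_dvd i by simp
  finally show "fst (frac (atraj n p v i 1 - p i), if Lazy = Perceptive then first_coll n p v i else None) = 0 = PhiB ids n F"
    by simp
qed

lemma odd_ok: "N \<le> 2 ^ M \<Longrightarrow> solves Basic N False (algoB (\<lambda>ob. fst ob = 0) Right Left) M"
proof (rule solves_bit)
  show "valid_algo Basic (algoB (\<lambda>ob. fst ob = 0) Right Left)" by (simp add: valid_algo_def allowed_def algoB_def)
  fix n ids p F v i assume "4 < n" "even n = False" "posvalid n p" and v: "\<forall>j<n. v j = vel (if movB (ids j) F then Right else Left)" and i: "i < n"
  have "(frac (atraj n p v i 1 - p i) = 0) = (int n dvd (\<Sum>j<n. \<lfloor>vel (if movB (ids j) F then Right else Left)\<rfloor>))"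
    by (rule obs_zero'[OF \<open>posvalid n p\<close> i v])
  also have "\<dots> = PhiB ids n F" unfolding sum_RL odd_dvd_iff[OF \<open>even n = False\<close>[unfolded eq_False]]
    using PhiB_dvd i by simp
  finally show "fst (frac (atraj n p v i 1 - p i), if Basic = Perceptive then first_coll n p v i else None) = 0 = PhiB ids n F"
    by simp
qed

lemma perc_ok: "N \<le> 2 ^ M \<Longrightarrow> solves Perceptive N par (algoB (\<lambda>ob. fst ob = 0 \<and> snd ob = None) Right Left) M"
proof (rule solves_bit)
  show "valid_algo Perceptive (algoB (\<lambda>ob. fst ob = 0 \<and> snd ob = None) Right Left)" by (simp add: valid_algo_def allowed_def algoB_def)
  fix n ids p F v i assume "4 < n" "posvalid n p" and v: "\<forall>j<n. v j = vel (if movB (ids j) F then Right else Left)" and i: "i < n"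
  have "(frac (atraj n p v i 1 - p i) = 0 \<and> first_coll n p v i = None) =
      (\<forall>j<n. (if movB (ids j) F then Right else Left) = (if movB (ids i) F then Right else Left))"
    by (rule flagP[OF \<open>posvalid n p\<close> i v]) auto
  also have "\<dots> = PhiB ids n F" unfolding PhiB_def using i by (auto split: if_splits)
  finally show "(\<lambda>ob. fst ob = 0 \<and> snd ob = None) (frac (atraj n p v i 1 - p i), if Perceptive = Perceptive then first_coll n p v i else None) = PhiB ids n F"
    by simp
qed

lemma Fs_nth: "k < r \<Longrightarrow> Fs Phi r ! k = Phi (Fs Phi k)"
proof (induction r)
  case (Suc r) thus ?case by (cases "k = r") (auto simp: nth_append less_Suc_eq)
qed simp

lemma sum_LR: "(\<Sum>j<n. \<lfloor>vel (if P j then Left else Right)\<rfloor>) = int n - 2 * int (card {j. j < n \<and> P j})" for n :: nat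
proof -
  have "(\<Sum>j<n. \<lfloor>vel (if P j then Left else Right)\<rfloor>) = (\<Sum>j<n. 1 - 2 * of_bool (P j))"
    by (rule sum.cong) (auto simp: vel_def floor_m1)
  also have "\<dots> = int n - 2 * (\<Sum>j<n. of_bool (P j))" by (simp add: sum_subtractf sum_distrib_left)
  also have "(\<Sum>j<n. of_bool (P j)) = int (card ({..<n} \<inter> {j. P j}))" by (rule sum_of_bool_eq) simp_all
  also have "{..<n} \<inter> {j. P j} = {j. j < n \<and> P j}" by auto
  finally show ?thesis .
qed

lemma even_dvd_iff:
  fixes n c :: nat assumes "0 < n" "c \<le> n"
  shows "int n dvd (int n - 2 * int c) \<longleftrightarrow> c = 0 \<or> 2 * c = n \<or> c = n"
proof
  assume "int n dvd (int n - 2 * int c)"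
  then obtain k where k: "int n - 2 * int c = int n * k" by blast
  have "- int n \<le> int n * k" "int n * k \<le> int n" using k assms by linarith+
  hence "-1 \<le> k" "k \<le> 1" using assms
    by (metis mult.right_neutral mult_le_cancel_left_pos mult_minus1_right of_nat_0_less_iff)+
  hence "k = -1 \<or> k = 0 \<or> k = 1" by linarith
  thus "c = 0 \<or> 2 * c = n \<or> c = n" using k by auto
next
  assume "c = 0 \<or> 2 * c = n \<or> c = n"
  thus "int n dvd (int n - 2 * int c)" by auto
qed

lemma dm_aux: "u < (K::nat) \<Longrightarrow> (b * K + u) div K = b \<and> (b * K + u) mod K = u"
  by (metis add.commute div_mult_self3 div_less mod_mult_self3 mod_less not_less0 gr_implies_not0 plus_nat.add_0 linorder_neqE_nat)

definition candE :: "nat \<Rightarrow> nat \<Rightarrow> bool list \<Rightarrow> bool" where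
  "candE M x F = (\<forall>b < length F div Suc M. (\<exists>u<Suc M. \<not> F ! (b * Suc M + u)) \<longrightarrow> bit (x - 1) b)"

definition leftE :: "nat \<Rightarrow> nat \<Rightarrow> bool list \<Rightarrow> bool" where
  "leftE M x F = (candE M x F \<and> bit (x - 1) (length F div Suc M) \<and>
      (length F mod Suc M = 0 \<or> bit (x - 1) (length F mod Suc M - 1)))"

definition DE :: "nat \<Rightarrow> nat \<Rightarrow> bool list \<Rightarrow> dir" where
  "DE M x F = (if leftE M x F then Left else Right)"

definition PhiE :: "(nat \<Rightarrow> nat) \<Rightarrow> nat \<Rightarrow> nat \<Rightarrow> bool list \<Rightarrow> bool" where
  "PhiE ids n M F = (int n dvd (\<Sum>j<n. \<lfloor>vel (DE M (ids j) F)\<rfloor>))"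

definition algoE :: "nat \<Rightarrow> algo" where
  "algoE M = ((\<lambda>x h. DE M x (map (\<lambda>ob. fst ob = 0) h)), (\<lambda>x h. candE M x (map (\<lambda>ob. fst ob = 0) h)))"

definition Pb :: "(nat \<Rightarrow> nat) \<Rightarrow> nat \<Rightarrow> nat \<Rightarrow> nat \<Rightarrow> bool" where
  "Pb ids n M b = (\<exists>u<Suc M. \<not> PhiE ids n M (Fs (PhiE ids n M) (b * Suc M + u)))"

definition csetP :: "(nat \<Rightarrow> nat) \<Rightarrow> nat \<Rightarrow> nat \<Rightarrow> nat \<Rightarrow> nat \<Rightarrow> bool" where
  "csetP ids n M b x = (\<forall>b'<b. Pb ids n M b' \<longrightarrow> bit (x - 1) b')"

lemma candE_FF: "candE M x (Fs (PhiE ids n M) r) = csetP ids n M (r div Suc M) x"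
proof -
  have "(\<exists>u<Suc M. \<not> Fs (PhiE ids n M) r ! (b * Suc M + u)) = Pb ids n M b" if b: "b < r div Suc M" for b
  proof -
    have "\<not> r div Suc M < Suc b" using b by simp
    hence "Suc b * Suc M \<le> r" using div_less_iff_less_mult[of "Suc M" r "Suc b"] by simp
    hence "\<And>u. u < Suc M \<Longrightarrow> b * Suc M + u < r" by auto
    thus ?thesis unfolding Pb_def using Fs_nth by (metis (no_types, lifting))
  qed
  thus ?thesis unfolding candE_def csetP_def by auto
qed

lemma PhiE_FF:
  assumes u: "u < Suc M"
  shows "PhiE ids n M (Fs (PhiE ids n M) (b * Suc M + u)) =
    (int n dvd (int n - 2 * int (card {j. j < n \<and> csetP ids n M b (ids j) \<and> bit (ids j - 1) b \<and>
        (u = 0 \<or> bit (ids j - 1) (u - 1))})))"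
proof -
  have dv: "(b * Suc M + u) div Suc M = b" and md: "(b * Suc M + u) mod Suc M = u" using dm_aux[OF u] by auto
  show ?thesis unfolding PhiE_def DE_def sum_LR leftE_def length_Fs dv md candE_FF by simp
qed


lemma csetP_Suc: "csetP ids n M (Suc b) x = (csetP ids n M b x \<and> (Pb ids n M b \<longrightarrow> bit (x - 1) b))"
  unfolding csetP_def by (auto simp: less_Suc_eq)

lemma phase_i:
  assumes "{j. j < n \<and> csetP ids n M b (ids j) \<and> bit (ids j - 1) b} = {}"
  shows "\<not> Pb ids n M b"
proof -
  have "PhiE ids n M (Fs (PhiE ids n M) (b * Suc M + u))" if u: "u < Suc M" for u
  proof -
    have e: "{j. j < n \<and> csetP ids n M b (ids j) \<and> bit (ids j - 1) b \<and> (u = 0 \<or> bit (ids j - 1) (u - 1))} = {}"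
      using assms by auto
    show ?thesis unfolding PhiE_FF[OF u] e by simp
  qed
  thus ?thesis unfolding Pb_def by auto
qed

lemma two_elems: assumes "finite B" "2 \<le> card B" shows "\<exists>j\<in>B. \<exists>j'\<in>B. j \<noteq> j'"
proof -
  obtain j where j: "j \<in> B" using assms by fastforce
  have "card (B - {j}) \<ge> 1" using assms j by simp
  hence "B - {j} \<noteq> {}" by (metis card.empty not_one_le_zero)
  then obtain j' where "j' \<in> B - {j}" by blast
  thus ?thesis using j by blast
qed

lemma bits_differ:
  fixes a b M :: nat
  assumes "a < 2 ^ M" "b < 2 ^ M" "a \<noteq> b"
  shows "\<exists>k<M. bit a k \<and> \<not> bit b k \<or> \<not> bit a k \<and> bit b k"
  using bits_eq[OF assms(1,2)] assms(3) by blast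

lemma phase_ii:
  assumes ev: "even n" and n4: "4 < n" and inj: "inj_on ids {..<n}"
    and rng: "\<forall>i<n. 1 \<le> ids i \<and> ids i \<le> 2 ^ M" and nP: "\<not> Pb ids n M b"
  shows "{j. j < n \<and> csetP ids n M b (ids j) \<and> bit (ids j - 1) b} = {} \<or>
         {j. j < n \<and> csetP ids n M b (ids j) \<and> bit (ids j - 1) b} = {..<n}"
proof -
  define B where "B = {j. j < n \<and> csetP ids n M b (ids j) \<and> bit (ids j - 1) b}"
  have Bs: "B \<subseteq> {..<n}" unfolding B_def by auto
  have cB: "card B \<le> n" using card_mono[OF _ Bs] by simp
  have ph: "PhiE ids n M (Fs (PhiE ids n M) (b * Suc M + u))" if "u < Suc M" for u
    using nP that unfolding Pb_def by auto
  have "int n dvd (int n - 2 * int (card B))" using ph[of 0] unfolding PhiE_FF[OF zero_less_Suc] B_def by simp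
  hence cases: "card B = 0 \<or> 2 * card B = n \<or> card B = n" using even_dvd_iff[OF _ cB] n4 by simp
  show ?thesis unfolding B_def[symmetric]
  proof (rule ccontr)
    assume nn: "\<not> (B = {} \<or> B = {..<n})"
    have "card B \<noteq> 0" using nn Bs finite_subset by fastforce
    moreover have "card B \<noteq> n" using nn Bs by (metis card_lessThan card_subset_eq finite_lessThan)
    ultimately have half: "2 * card B = n" using cases by simp
    hence "2 \<le> card B" using n4 by simp
    then obtain j j' where jj: "j \<in> B" "j' \<in> B" "j \<noteq> j'" using two_elems[of B] Bs finite_subset by blast
    have ids_ne: "ids j - 1 \<noteq> ids j' - 1"
    proof
      assume "ids j - 1 = ids j' - 1"
      moreover have "1 \<le> ids j" "1 \<le> ids j'" using rng jj Bs by auto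
      ultimately have "ids j = ids j'" by arith
      thus False using inj jj Bs unfolding inj_on_def by auto
    qed
    have "ids j \<le> 2 ^ M" "1 \<le> ids j" "ids j' \<le> 2 ^ M" "1 \<le> ids j'" using rng jj Bs by auto
    hence lt: "ids j - 1 < 2 ^ M" "ids j' - 1 < 2 ^ M" by linarith+
    obtain k where k: "k < M" "bit (ids j - 1) k \<and> \<not> bit (ids j' - 1) k \<or> \<not> bit (ids j - 1) k \<and> bit (ids j' - 1) k"
      using bits_differ[OF lt ids_ne] by blast
    define L where "L = {l. l < n \<and> csetP ids n M b (ids l) \<and> bit (ids l - 1) b \<and> (Suc k = 0 \<or> bit (ids l - 1) (Suc k - 1))}"
    have LB: "L \<subseteq> B" unfolding L_def B_def by auto
    have L1: "L \<noteq> {}" and L2: "L \<noteq> B" using k jj unfolding L_def B_def by auto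
    have fB: "finite B" using Bs finite_subset by blast
    have fL: "finite L" using LB fB finite_subset by blast
    have c1: "0 < card L" using L1 fL by (simp add: card_gt_0_iff)
    have c2: "card L < card B" using LB L2 fB by (intro psubset_card_mono) auto
    have c3: "card L \<le> n" using c2 cB by simp
    have sk: "Suc k < Suc M" using k(1) by simp
    have "int n dvd (int n - 2 * int (card L))" using ph[OF sk] unfolding PhiE_FF[OF sk] L_def .
    hence "card L = 0 \<or> 2 * card L = n \<or> card L = n" using even_dvd_iff[OF _ c3] n4 by simp
    thus False using c1 c2 half by linarith
  qed
qed

lemma E_inv:
  assumes ev: "even n" and n4: "4 < n" and inj: "inj_on ids {..<n}"
    and rng: "\<forall>i<n. 1 \<le> ids i \<and> ids i \<le> 2 ^ M"
  shows "(\<exists>j<n. csetP ids n M b (ids j)) \<and>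
    (\<forall>j<n. \<forall>j'<n. csetP ids n M b (ids j) \<longrightarrow> csetP ids n M b (ids j') \<longrightarrow> (\<forall>k<b. bit (ids j - 1) k = bit (ids j' - 1) k))"
proof (induction b)
  case 0
  then show ?case using n4 unfolding csetP_def by auto
next
  case (Suc b)
  define B where "B = {j. j < n \<and> csetP ids n M b (ids j) \<and> bit (ids j - 1) b}"
  show ?case
  proof (cases "Pb ids n M b")
    case True
    hence Bne: "B \<noteq> {}" using phase_i unfolding B_def by blast
    then obtain j where "j \<in> B" by auto
    hence ex: "\<exists>j<n. csetP ids n M (Suc b) (ids j)" unfolding B_def csetP_Suc using True by auto
    show ?thesis
    proof (intro conjI ex allI impI)
      fix j j' k assume j: "j < n" "j' < n" "csetP ids n M (Suc b) (ids j)" "csetP ids n M (Suc b) (ids j')" "k < Suc b"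
      thus "bit (ids j - 1) k = bit (ids j' - 1) k" using Suc.IH True unfolding csetP_Suc
        by (metis less_Suc_eq)
    qed
  next
    case False
    have cs: "csetP ids n M (Suc b) x = csetP ids n M b x" for x unfolding csetP_Suc using False by simp
    have BB: "B = {} \<or> B = {..<n}" using phase_ii[OF ev n4 inj rng False] unfolding B_def .
    show ?thesis unfolding cs
    proof (intro conjI allI impI)
      show "\<exists>j<n. csetP ids n M b (ids j)" using Suc.IH by blast
      fix j j' k assume j: "j < n" "j' < n" "csetP ids n M b (ids j)" "csetP ids n M b (ids j')" "k < Suc b"
      show "bit (ids j - 1) k = bit (ids j' - 1) k"
      proof (cases "k < b")
        case True thus ?thesis using Suc.IH j by blast
      next
        case False hence kb: "k = b" using j by simp
        from BB show ?thesis
        proof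
          assume "B = {}" thus ?thesis using j kb unfolding B_def by auto
        next
          assume "B = {..<n}" hence "j \<in> B" "j' \<in> B" using j by auto
          thus ?thesis using kb unfolding B_def by auto
        qed
      qed
    qed
  qed
qed

lemma snd_algoE: "snd (algoE M) x h = candE M x (map (\<lambda>ob. fst ob = 0) h)" by (simp add: algoE_def)

lemma even_ok:
  assumes NM: "N \<le> 2 ^ M"
  shows "solves Basic N True (algoE M) (M * Suc M)"
  unfolding solves_def
proof (intro conjI allI impI)
  show "valid_algo Basic (algoE M)" by (simp add: valid_algo_def allowed_def algoE_def DE_def)
  fix n ids p assume vi: "valid_instance N n ids p \<and> even n = True"
  have n4: "4 < n" and inj: "inj_on ids {..<n}" and rng: "\<forall>i<n. 1 \<le> ids i \<and> ids i \<le> N" and ev: "even n"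
    using vi unfolding valid_instance_def by auto
  have rng2: "\<forall>i<n. 1 \<le> ids i \<and> ids i \<le> 2 ^ M" using rng NM by force
  have ri: "posvalid n (fst (run Basic n ids p (algoE M) (M * Suc M))) \<and>
      (\<forall>i<n. map (\<lambda>ob. fst ob = 0) (snd (run Basic n ids p (algoE M) (M * Suc M)) i) = Fs (PhiE ids n M) (M * Suc M))"
  proof (rule run_inv[where D = "DE M"])
    show "fst (algoE M) = (\<lambda>x h. DE M x (map (\<lambda>ob. fst ob = 0) h))" by (simp add: algoE_def)
    show "posvalid n p" using vi posvalid_inst by blast
    fix p' F v i assume pv: "posvalid n p'" and v: "\<forall>j<n. v j = vel (DE M (ids j) F)" and i: "i < n"
    have "(frac (atraj n p' v i 1 - p' i) = 0) = PhiE ids n M F"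
      unfolding PhiE_def by (rule obs_zero'[OF pv i v])
    thus "(\<lambda>ob. fst ob = 0) (frac (atraj n p' v i 1 - p' i), if Basic = Perceptive then first_coll n p' v i else None) = PhiE ids n M F"
      by simp
  qed
  have cand: "\<And>i. i < n \<Longrightarrow> snd (algoE M) (ids i) (snd (run Basic n ids p (algoE M) (M * Suc M)) i)
      = csetP ids n M M (ids i)"
  proof -
    fix i assume "i < n"
    hence "snd (algoE M) (ids i) (snd (run Basic n ids p (algoE M) (M * Suc M)) i) = candE M (ids i) (Fs (PhiE ids n M) (M * Suc M))"
      using ri by (simp only: snd_algoE)
    also have "\<dots> = csetP ids n M (M * Suc M div Suc M) (ids i)" by (rule candE_FF)
    also have "M * Suc M div Suc M = M" by (metis nonzero_mult_div_cancel_right nat.simps(3))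
    finally show "snd (algoE M) (ids i) (snd (run Basic n ids p (algoE M) (M * Suc M)) i) = csetP ids n M M (ids i)" .
  qed
  obtain j where j: "j < n" "csetP ids n M M (ids j)" using E_inv[OF ev n4 inj rng2, of M] by blast
  have "i = j" if i: "i < n" "csetP ids n M M (ids i)" for i
  proof -
    have "\<forall>k<M. bit (ids i - 1) k = bit (ids j - 1) k" using E_inv[OF ev n4 inj rng2, of M] i j by blast
    moreover have "ids i \<le> 2 ^ M" "1 \<le> ids i" "ids j \<le> 2 ^ M" "1 \<le> ids j" using rng2 i j by auto
    hence "ids i - 1 < 2 ^ M" "ids j - 1 < 2 ^ M" by linarith+
    ultimately have "ids i - 1 = ids j - 1" using bits_eq by blast
    moreover have "1 \<le> ids i" "1 \<le> ids j" using rng2 i j by auto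
    ultimately have "ids i = ids j" by arith
    thus ?thesis using inj i j unfolding inj_on_def by auto
  qed
  thus "elects Basic n ids p (algoE M) (M * Suc M)" unfolding elects_def using cand j by metis
qed


lemma N_le: "N \<le> 2 ^ nat \<lceil>log 2 (real N)\<rceil>"
proof (cases "N = 0")
  case False
  hence N: "0 < real N" by simp
  have l0: "0 \<le> log 2 (real N)" using False by simp
  have "real N = 2 powr log 2 (real N)" using N by simp
  also have "\<dots> \<le> 2 powr real_of_int \<lceil>log 2 (real N)\<rceil>" by (intro powr_mono) auto
  also have "real_of_int \<lceil>log 2 (real N)\<rceil> = real (nat \<lceil>log 2 (real N)\<rceil>)" using l0 by simp
  also have "2 powr real (nat \<lceil>log 2 (real N)\<rceil>) = 2 ^ nat \<lceil>log 2 (real N)\<rceil>" by (simp add: powr_realpow)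
  finally have "real N \<le> real (2 ^ nat \<lceil>log 2 (real N)\<rceil>)" by simp
  thus ?thesis by (simp only: of_nat_le_iff)
qed simp

lemma T_bound: "real (nat \<lceil>log 2 (real N)\<rceil> * Suc (nat \<lceil>log 2 (real N)\<rceil>)) \<le> 6 * (log 2 (real N))^2"
proof (cases "N \<le> 1")
  case True
  hence "log 2 (real N) = 0" by (cases N) (auto simp: log_def)
  thus ?thesis by simp
next
  case False
  define L where "L = log 2 (real N)"
  have L1: "1 \<le> L" unfolding L_def using False by simp
  have "real (nat \<lceil>L\<rceil>) = of_int \<lceil>L\<rceil>" using L1 by simp
  hence M: "real (nat \<lceil>L\<rceil>) \<le> L + 1" by linarith
  have "real (nat \<lceil>L\<rceil> * Suc (nat \<lceil>L\<rceil>)) = real (nat \<lceil>L\<rceil>) * (real (nat \<lceil>L\<rceil>) + 1)" by (simp add: algebra_simps)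
  also have "\<dots> \<le> (2 * L) * (3 * L)"
  proof (rule mult_mono)
    show "real (nat \<lceil>L\<rceil>) \<le> 2 * L" using M L1 by linarith
    show "real (nat \<lceil>L\<rceil>) + 1 \<le> 3 * L" using M L1 by linarith
  qed (use L1 in auto)
  also have "\<dots> = 6 * L^2" by (simp add: power2_eq_square)
  finally show ?thesis unfolding L_def .
qed

theorem lemma10:
  shows "(\<exists>C::real. \<forall>N. \<exists>A T. real T \<le> C * (log 2 (real N))^2 \<and> solves Basic N True A T)
       \<and> (\<forall>N. \<exists>A T. T \<le> nat \<lceil>log 2 (real N)\<rceil> \<and> solves Basic N False A T)
       \<and> (\<forall>N par. \<exists>A T. T \<le> nat \<lceil>log 2 (real N)\<rceil> \<and> solves Lazy N par A T)
       \<and> (\<forall>N par. \<exists>A T. T \<le> nat \<lceil>log 2 (real N)\<rceil> \<and> solves Perceptive N par A T)"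
proof -
  have c1: "\<forall>N. \<exists>A T. real T \<le> 6 * (log 2 (real N))^2 \<and> solves Basic N True A T"
  proof
    fix N
    show "\<exists>A T. real T \<le> 6 * (log 2 (real N))^2 \<and> solves Basic N True A T"
      using T_bound even_ok[OF N_le] by blast
  qed
  have c2: "\<forall>N. \<exists>A T. T \<le> nat \<lceil>log 2 (real N)\<rceil> \<and> solves Basic N False A T"
    using odd_ok[OF N_le] by blast
  have c3: "\<forall>N par. \<exists>A T. T \<le> nat \<lceil>log 2 (real N)\<rceil> \<and> solves Lazy N par A T"
    using lazy_ok[OF N_le] by blast
  have c4: "\<forall>N par. \<exists>A T. T \<le> nat \<lceil>log 2 (real N)\<rceil> \<and> solves Perceptive N par A T"
    using perc_ok[OF N_le] by blast
  show ?thesis using c1 c2 c3 c4 by blast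
qed

end
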